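(* Let $\varphi$ be a skew-morphism of a finite group $A$ with power function $\pi:A\to\mathbb{Z}_m$, where $m$ is the order of $\varphi$, let $n$ be a positive multiple of $m$, and let $\Pi:A\to\mathbb{Z}_n$ be an extended power function of $\varphi$. Let $\mathrm{Av}:A\to\mathbb{Z}_{n/m}$ and $\Lambda:A\to\mathbb{Z}_{n/m}$ be the average and mate functions of $\Pi$. Then: (a) $\mathrm{Av}(x)\equiv\mathrm{Av}(\varphi(x))\pmod{n/m}$ for all $x\in A$; (b) $\mathrm{Av}$ is a group homomorphism from $A$ into the multiplicative group $\mathbb{Z}_{n/m}^*$; (c) if $\varphi$ is an automorphism of $A$, then $\Lambda(xy)\equiv\Lambda(y)+\Lambda(x)\mathrm{Av}(y)\pmod{n/m}$ for all $x,y\in A$; in particular, if $\mathrm{Av}(x)\equiv1\pmod{n/m}$ for all $x\in A$, then $\Lambda(xy)\equiv\Lambda(x)+\Lambda(y)\pmod{n/m}$ for all $x,y\in A$.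
   Context: A skew-morphism of a finite group $A$ is a permutation $\varphi$ of $A$ with $\varphi(1_A)=1_A$ for which there is a function $\pi:A\to\mathbb{Z}_m$ ($m$ the order of $\varphi$) with $\varphi(xy)=\varphi(x)\varphi^{\pi(x)}(y)$ for all $x,y\in A$; when $\varphi$ is an automorphism, $\pi(x)\equiv1\pmod m$ for all $x$. For a positive multiple $n$ of $m$, $\Pi:A\to\mathbb{Z}_n$ is an extended power function of $\varphi$ if (i) $\Pi(x)\equiv\pi(x)\pmod m$; (ii) $\Pi(1_A)\equiv1\pmod n$; (iii) $\Pi(xy)\equiv\sum_{i=1}^{\Pi(x)}\Pi(\varphi^{i-1}(y))\pmod n$ for all $x,y\in A$. Let $\sigma_\Pi(x,k)=\sum_{i=1}^{k}\Pi(\varphi^{i-1}(x))\in\mathbb{Z}_n$. Since $\sigma_\Pi(x,m)\equiv0\pmod m$, the average function is $\mathrm{Av}(x)=\frac1m\sigma_\Pi(x,m)\in\mathbb{Z}_{n/m}$, and the mate function is $\Lambda(x)=\frac1m(\Pi(x)-\pi(x))\in\mathbb{Z}_{n/m}$, where $\pi(x)$ is represented by an integer congruent to it modulo $m$ (in the automorphism case, by $1$). *)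

theory Defs
  imports "HOL-Algebra.Group" "HOL-Number_Theory.Cong"
begin

definition perm_ord :: "('a \<Rightarrow> 'a) \<Rightarrow> 'a set \<Rightarrow> nat" where
  "perm_ord \<phi> A = (LEAST k. 0 < k \<and> (\<forall>x\<in>A. (\<phi> ^^ k) x = x))"

definition skew_morphism :: "('a, 'b) monoid_scheme \<Rightarrow> ('a \<Rightarrow> 'a) \<Rightarrow> ('a \<Rightarrow> nat) \<Rightarrow> bool" where
  "skew_morphism G \<phi> \<pi> \<longleftrightarrow>
     bij_betw \<phi> (carrier G) (carrier G) \<and> \<phi> \<one>\<^bsub>G\<^esub> = \<one>\<^bsub>G\<^esub> \<and>
     (\<forall>x\<in>carrier G. \<pi> x < perm_ord \<phi> (carrier G)) \<and>
     (\<forall>x\<in>carrier G. \<forall>y\<in>carrier G. \<phi> (x \<otimes>\<^bsub>G\<^esub> y) = \<phi> x \<otimes>\<^bsub>G\<^esub> (\<phi> ^^ \<pi> x) y)"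

definition ext_power_fun ::
  "('a, 'b) monoid_scheme \<Rightarrow> ('a \<Rightarrow> 'a) \<Rightarrow> ('a \<Rightarrow> nat) \<Rightarrow> nat \<Rightarrow> ('a \<Rightarrow> nat) \<Rightarrow> bool" where
  "ext_power_fun G \<phi> \<pi> n Pw \<longleftrightarrow>
     0 < n \<and> perm_ord \<phi> (carrier G) dvd n \<and>
     (\<forall>x\<in>carrier G. Pw x < n) \<and>
     (\<forall>x\<in>carrier G. [Pw x = \<pi> x] (mod perm_ord \<phi> (carrier G))) \<and>
     [Pw \<one>\<^bsub>G\<^esub> = 1] (mod n) \<and>
     (\<forall>x\<in>carrier G. \<forall>y\<in>carrier G.
        [Pw (x \<otimes>\<^bsub>G\<^esub> y) = (\<Sum>i=1..Pw x. Pw ((\<phi> ^^ (i - 1)) y))] (mod n))"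

definition sigma_Pi :: "('a \<Rightarrow> 'a) \<Rightarrow> ('a \<Rightarrow> nat) \<Rightarrow> 'a \<Rightarrow> nat \<Rightarrow> int" where
  "sigma_Pi \<phi> Pw x k = (\<Sum>i=1..k. int (Pw ((\<phi> ^^ (i - 1)) x)))"

text \<open>Average function Av(x) = sigma_Pi(x,m)/m in Z_{n/m}, with sigma_Pi(x,m) taken as its
  representative in {0..<n}; the result lies in {0..<n/m}.\<close>
definition avg_fun :: "('a, 'b) monoid_scheme \<Rightarrow> ('a \<Rightarrow> 'a) \<Rightarrow> nat \<Rightarrow> ('a \<Rightarrow> nat) \<Rightarrow> 'a \<Rightarrow> int" where
  "avg_fun G \<phi> n Pw x =
     (sigma_Pi \<phi> Pw x (perm_ord \<phi> (carrier G)) mod int n) div int (perm_ord \<phi> (carrier G))"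

text \<open>Mate function Lambda(x) = (Pi(x) - r(x))/m in Z_{n/m}, where r(x) is the chosen integer
  representative of pi(x) (in the automorphism case r(x) = 1).\<close>
definition mate_fun ::
  "('a, 'b) monoid_scheme \<Rightarrow> ('a \<Rightarrow> 'a) \<Rightarrow> nat \<Rightarrow> ('a \<Rightarrow> nat) \<Rightarrow> ('a \<Rightarrow> int) \<Rightarrow> 'a \<Rightarrow> int" where
  "mate_fun G \<phi> n Pw r x =
     ((int (Pw x) - r x) div int (perm_ord \<phi> (carrier G))) mod int (n div perm_ord \<phi> (carrier G))"

end

theory Submission
  imports Defs "HOL-Combinatorics.Cycles"
begin

lemma cong_cancel_mult_int:
  fixes a b m d :: int
  assumes "m > 0" "[m * a = m * b] (mod (m * d))"
  shows "[a = b] (mod d)"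
  using assms unfolding cong_def by (simp add: mod_mult_mult1)

locale skctx = group G for G :: "('a, 'b) monoid_scheme" (structure) +
  fixes \<phi> :: "'a \<Rightarrow> 'a" and \<pi> Pw :: "'a \<Rightarrow> nat" and n :: nat
  assumes fin: "finite (carrier G)"
    and sk: "skew_morphism G \<phi> \<pi>"
    and ep: "ext_power_fun G \<phi> \<pi> n Pw"
begin

abbreviation "m \<equiv> perm_ord \<phi> (carrier G)"

definition S :: "'a \<Rightarrow> nat \<Rightarrow> int" where
  "S y k = (\<Sum>j<k. int (Pw ((\<phi> ^^ j) y)))"

definition s :: "'a \<Rightarrow> nat \<Rightarrow> nat" where
  "s x k = (\<Sum>j<k. Pw ((\<phi> ^^ j) x))"

lemma bij: "bij_betw \<phi> (carrier G) (carrier G)"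
  using sk unfolding skew_morphism_def by blast

lemma phi_in: "x \<in> carrier G \<Longrightarrow> \<phi> x \<in> carrier G"
  using bij bij_betwE by blast

lemma phin_in: "x \<in> carrier G \<Longrightarrow> (\<phi> ^^ k) x \<in> carrier G"
  by (induction k) (auto simp: phi_in)

lemma skew: "x \<in> carrier G \<Longrightarrow> y \<in> carrier G \<Longrightarrow> \<phi> (x \<otimes> y) = \<phi> x \<otimes> (\<phi> ^^ \<pi> x) y"
  using sk unfolding skew_morphism_def by blast

lemma exists_period: "\<exists>k. 0 < k \<and> (\<forall>x\<in>carrier G. (\<phi> ^^ k) x = x)"
proof -
  define \<psi> where "\<psi> x = (if x \<in> carrier G then \<phi> x else x)" for x
  have bb: "bij_betw \<psi> (carrier G) (carrier G)"
    using bij unfolding \<psi>_def by (rule bij_betw_cong[THEN iffD1, rotated]) auto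
  have "\<psi> permutes carrier G"
    by (rule bij_imp_permutes[OF bb]) (simp add: \<psi>_def)
  then have "permutation \<psi>" using fin permutes_imp_permutation by blast
  then obtain k where k: "(\<psi> ^^ k) = id" "k > 0" by (rule permutation_is_nilpotent)
  have eq: "x \<in> carrier G \<Longrightarrow> (\<psi> ^^ j) x = (\<phi> ^^ j) x" for x j
    by (induction j) (auto simp: \<psi>_def phin_in)
  show ?thesis using k eq by (metis id_apply)
qed

lemma m_pos: "0 < m" and phi_m: "x \<in> carrier G \<Longrightarrow> (\<phi> ^^ m) x = x"
proof -
  have "0 < m \<and> (\<forall>x\<in>carrier G. (\<phi> ^^ m) x = x)"
    unfolding perm_ord_def by (rule LeastI_ex[OF exists_period])
  then show "0 < m" "x \<in> carrier G \<Longrightarrow> (\<phi> ^^ m) x = x" by auto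
qed

lemma phi_mult_m: "x \<in> carrier G \<Longrightarrow> (\<phi> ^^ (q * m)) x = x"
proof (induction q)
  case (Suc q)
  have "(\<phi> ^^ (Suc q * m)) x = (\<phi> ^^ m) ((\<phi> ^^ (q * m)) x)"
    by (simp add: funpow_add)
  then show ?case using Suc phi_m by simp
qed simp

lemma funpow_mod: "x \<in> carrier G \<Longrightarrow> (\<phi> ^^ k) x = (\<phi> ^^ (k mod m)) x"
proof -
  assume x: "x \<in> carrier G"
  have "(\<phi> ^^ k) x = (\<phi> ^^ (k mod m + (k div m) * m)) x" by (metis mod_div_mult_eq)
  also have "\<dots> = (\<phi> ^^ (k mod m)) ((\<phi> ^^ ((k div m) * m)) x)" by (simp add: funpow_add)
  also have "\<dots> = (\<phi> ^^ (k mod m)) x" using phi_mult_m x by simp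
  finally show ?thesis .
qed

lemma funpow_cong: "x \<in> carrier G \<Longrightarrow> [a = b] (mod m) \<Longrightarrow> (\<phi> ^^ a) x = (\<phi> ^^ b) x"
  by (metis funpow_mod cong_def)

lemma m_dvd: assumes "\<forall>y\<in>carrier G. (\<phi> ^^ k) y = y" shows "m dvd k"
proof (rule ccontr)
  assume nd: "\<not> m dvd k"
  then have pos: "0 < k mod m" by (simp add: mod_greater_zero_iff_not_dvd)
  have lt: "k mod m < m" using m_pos by simp
  have "\<forall>y\<in>carrier G. (\<phi> ^^ (k mod m)) y = y" using assms funpow_mod by metis
  then have P: "0 < k mod m \<and> (\<forall>y\<in>carrier G. (\<phi> ^^ (k mod m)) y = y)" using pos by blast
  have "m \<le> k mod m" using P unfolding perm_ord_def by (rule Least_le)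
  then show False using lt by simp
qed

lemma S_Suc: "S y (Suc k) = S y k + int (Pw ((\<phi> ^^ k) y))"
  by (simp add: S_def)

lemma S_split: "S y (a + t) = S y a + S ((\<phi> ^^ a) y) t"
proof (induction t)
  case 0 then show ?case by (simp add: S_def)
next
  case (Suc t)
  have "(\<phi> ^^ t) ((\<phi> ^^ a) y) = (\<phi> ^^ (a + t)) y"
    by (metis add.commute comp_apply funpow_add)
  then show ?case using Suc by (simp add: S_Suc)
qed

lemma S_phi: assumes "z \<in> carrier G" shows "S (\<phi> z) m = S z m"
proof -
  have "S z (1 + m) = S z 1 + S ((\<phi> ^^ 1) z) m" by (rule S_split)
  moreover have "S z (1 + m) = S z m + int (Pw z)"
    using S_Suc[of z m] phi_m[OF assms] by simp
  moreover have "S z 1 = int (Pw z)" by (simp add: S_def)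
  ultimately show ?thesis by simp
qed

lemma S_phin: "y \<in> carrier G \<Longrightarrow> S ((\<phi> ^^ k) y) m = S y m"
  by (induction k) (auto simp: S_phi phin_in)

lemma S_add_m: "y \<in> carrier G \<Longrightarrow> S y (k + m) = S y k + S y m"
  using S_split[of y k m] S_phin by simp

lemma S_mult: "y \<in> carrier G \<Longrightarrow> S y (k + q * m) = S y k + int q * S y m"
proof (induction q)
  case (Suc q)
  have "S y (k + Suc q * m) = S y ((k + q * m) + m)" by (simp add: algebra_simps)
  also have "\<dots> = S y (k + q * m) + S y m" using S_add_m Suc by blast
  finally show ?case using Suc by (simp add: algebra_simps)
qed simp

lemma sigma_S: "sigma_Pi \<phi> Pw y k = S y k"
proof (induction k)
  case 0 then show ?case by (simp add: sigma_Pi_def S_def)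
next
  case (Suc k)
  have "sigma_Pi \<phi> Pw y (Suc k) = sigma_Pi \<phi> Pw y k + int (Pw ((\<phi> ^^ k) y))"
    unfolding sigma_Pi_def by simp
  then show ?case using Suc by (simp add: S_Suc)
qed

lemma S_s: "S x k = int (s x k)"
  by (simp add: S_def s_def)

lemma n_pos: "0 < n" and m_dvd_n: "m dvd n" and Pw_cong: "x \<in> carrier G \<Longrightarrow> [Pw x = \<pi> x] (mod m)"
  and Pw_one: "[Pw \<one> = 1] (mod n)"
  and Pw_lt: "x \<in> carrier G \<Longrightarrow> Pw x < n"
  using ep unfolding ext_power_fun_def by auto

lemma Pw_mult: assumes "x \<in> carrier G" "y \<in> carrier G"
  shows "[int (Pw (x \<otimes> y)) = S y (Pw x)] (mod int n)"
proof -
  have "[Pw (x \<otimes> y) = (\<Sum>i=1..Pw x. Pw ((\<phi> ^^ (i - 1)) y))] (mod n)"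
    using ep assms unfolding ext_power_fun_def by blast
  then have "[int (Pw (x \<otimes> y)) = int (\<Sum>i=1..Pw x. Pw ((\<phi> ^^ (i - 1)) y))] (mod int n)"
    using cong_int_iff by blast
  moreover have "int (\<Sum>i=1..Pw x. Pw ((\<phi> ^^ (i - 1)) y)) = sigma_Pi \<phi> Pw y (Pw x)"
    by (simp add: sigma_Pi_def)
  ultimately show ?thesis using sigma_S by simp
qed

lemma iter: assumes "x \<in> carrier G" "y \<in> carrier G"
  shows "(\<phi> ^^ i) (x \<otimes> y) = (\<phi> ^^ i) x \<otimes> (\<phi> ^^ s x i) y"
proof (induction i)
  case 0 then show ?case by (simp add: s_def)
next
  case (Suc i)
  have "(\<phi> ^^ Suc i) (x \<otimes> y) = \<phi> ((\<phi> ^^ i) x \<otimes> (\<phi> ^^ s x i) y)" using Suc by simp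
  also have "\<dots> = (\<phi> ^^ Suc i) x \<otimes> (\<phi> ^^ \<pi> ((\<phi> ^^ i) x)) ((\<phi> ^^ s x i) y)"
    using skew phin_in assms by simp
  also have "(\<phi> ^^ \<pi> ((\<phi> ^^ i) x)) ((\<phi> ^^ s x i) y) = (\<phi> ^^ (\<pi> ((\<phi> ^^ i) x) + s x i)) y"
    by (simp add: funpow_add)
  also have "\<dots> = (\<phi> ^^ (Pw ((\<phi> ^^ i) x) + s x i)) y"
    using funpow_cong assms Pw_cong[OF phin_in[OF assms(1)]]
    by (metis cong_add_rcancel_nat cong_sym)
  also have "Pw ((\<phi> ^^ i) x) + s x i = s x (Suc i)" by (simp add: s_def)
  finally show ?case .
qed

lemma m_dvd_s: assumes "x \<in> carrier G" shows "m dvd s x m"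
proof (rule m_dvd, intro ballI)
  fix y assume y: "y \<in> carrier G"
  have "x \<otimes> y = x \<otimes> (\<phi> ^^ s x m) y"
    using iter[OF assms y, of m] phi_m assms y by simp
  then show "(\<phi> ^^ s x m) y = y"
    using Units_eq Units_l_cancel assms y phin_in by metis
qed

lemma S_prod: assumes "x \<in> carrier G" "y \<in> carrier G"
  shows "[S (x \<otimes> y) k = S y (s x k)] (mod int n)"
proof (induction k)
  case 0 then show ?case by (simp add: S_def s_def)
next
  case (Suc k)
  have "[int (Pw ((\<phi> ^^ k) (x \<otimes> y))) = S ((\<phi> ^^ s x k) y) (Pw ((\<phi> ^^ k) x))] (mod int n)"
    using iter[OF assms] Pw_mult phin_in assms by metis
  then have "[S (x \<otimes> y) k + int (Pw ((\<phi> ^^ k) (x \<otimes> y))) =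
      S y (s x k) + S ((\<phi> ^^ s x k) y) (Pw ((\<phi> ^^ k) x))] (mod int n)"
    using Suc cong_add by blast
  moreover have "S y (s x k) + S ((\<phi> ^^ s x k) y) (Pw ((\<phi> ^^ k) x)) = S y (s x (Suc k))"
    using S_split[of y "s x k"] by (simp add: s_def)
  ultimately show ?case by (simp add: S_Suc)
qed

definition A :: "'a \<Rightarrow> int" where "A x = S x m div int m"

lemma S_A: "x \<in> carrier G \<Longrightarrow> S x m = int m * A x"
  unfolding A_def S_s using m_dvd_s by (simp add: dvd_mult_div_cancel)

definition D :: int where "D = int (n div m)"

lemma n_eq: "int n = int m * D"
  unfolding D_def using m_dvd_n by (metis dvd_mult_div_cancel of_nat_mult)

lemma Av_eq: "x \<in> carrier G \<Longrightarrow> avg_fun G \<phi> n Pw x = A x mod D"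
proof -
  assume x: "x \<in> carrier G"
  have "avg_fun G \<phi> n Pw x = (S x m mod int n) div int m"
    unfolding avg_fun_def sigma_S ..
  also have "\<dots> = (int m * (A x mod D)) div int m"
    using S_A[OF x] n_eq by (simp add: mod_mult_mult1)
  also have "\<dots> = A x mod D" using m_pos by simp
  finally show ?thesis .
qed

lemma A_phi: "x \<in> carrier G \<Longrightarrow> A (\<phi> x) = A x"
  unfolding A_def using S_phi by simp

lemma A_mult: assumes "x \<in> carrier G" "y \<in> carrier G"
  shows "[A (x \<otimes> y) = A x * A y] (mod D)"
proof -
  have "[S (x \<otimes> y) m = S y (s x m)] (mod int n)" by (rule S_prod[OF assms])
  moreover have "s x m = 0 + (s x m div m) * m" using m_dvd_s[OF assms(1)] by simp
  then have "S y (s x m) = int (s x m div m) * S y m"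
    using S_mult[OF assms(2), of 0 "s x m div m"] by (simp add: S_def)
  moreover have "int (s x m div m) = A x" unfolding A_def S_s by (simp add: zdiv_int)
  ultimately have "[int m * A (x \<otimes> y) = int m * (A x * A y)] (mod int m * D)"
    using S_A assms n_eq by (simp add: algebra_simps)
  then show ?thesis by (metis cong_cancel_mult_int m_pos of_nat_0_less_iff)
qed

lemma phi_one: "\<phi> \<one> = \<one>"
  using sk unfolding skew_morphism_def by blast

lemma phin_one: "(\<phi> ^^ k) \<one> = \<one>"
  by (induction k) (auto simp: phi_one)

lemma D_dvd_n: "D dvd int n" using n_eq by simp

lemma A_one: "[A \<one> = 1] (mod D)"
proof -
  have "S \<one> m = int m * int (Pw \<one>)"
    unfolding S_def phin_one by simp
  then have "A \<one> = int (Pw \<one>)" unfolding A_def using m_pos by simp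
  moreover have "[int (Pw \<one>) = 1] (mod int n)" using Pw_one by (metis cong_int_iff of_nat_1)
  ultimately show ?thesis using cong_dvd_modulus D_dvd_n by metis
qed

lemma A_coprime: assumes "x \<in> carrier G" shows "coprime (A x mod D) D"
proof -
  have "[A x * A (inv x) = A (x \<otimes> inv x)] (mod D)"
    using A_mult[OF assms inv_closed[OF assms]] by (rule cong_sym)
  also have "A (x \<otimes> inv x) = A \<one>" using assms by simp
  also have "[A \<one> = 1] (mod D)" by (rule A_one)
  finally have c: "[A x * A (inv x) = 1] (mod D)" .
  have "[(A x mod D) * A (inv x) = A x * A (inv x)] (mod D)"
    by (simp add: cong_def mod_mult_left_eq)
  then have "[(A x mod D) * A (inv x) = 1] (mod D)" using c by (rule cong_trans)
  then show ?thesis using coprime_iff_invertible_int by blast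
qed

lemma pi_one: assumes hom: "\<phi> \<in> hom G G" and x: "x \<in> carrier G"
  shows "[\<pi> x = 1] (mod m)"
proof -
  have "\<forall>y\<in>carrier G. (\<phi> ^^ (\<pi> x + (m - 1))) y = y"
  proof
    fix y assume y: "y \<in> carrier G"
    have "\<phi> x \<otimes> \<phi> y = \<phi> x \<otimes> (\<phi> ^^ \<pi> x) y"
      using skew[OF x y] hom x y by (simp add: hom_mult)
    then have e: "(\<phi> ^^ \<pi> x) y = \<phi> y"
      using Units_eq Units_l_cancel x y phin_in phi_in by metis
    have "(\<phi> ^^ (\<pi> x + (m - 1))) y = (\<phi> ^^ (m - 1)) ((\<phi> ^^ \<pi> x) y)"
      by (metis add.commute comp_apply funpow_add)
    also have "\<dots> = (\<phi> ^^ (m - 1 + 1)) y" using e by (simp add: funpow_swap1)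
    also have "m - 1 + 1 = m" using m_pos by simp
    finally show "(\<phi> ^^ (\<pi> x + (m - 1))) y = y" using phi_m y by simp
  qed
  then have "m dvd \<pi> x + (m - 1)" by (rule m_dvd)
  then have "[\<pi> x + (m - 1) = 1 + (m - 1)] (mod m)"
    using m_pos by (simp add: cong_def)
  then show ?thesis using cong_add_rcancel_nat by blast
qed

definition L :: "'a \<Rightarrow> int" where "L x = (int (Pw x) - 1) div int m"

lemma L_eq: assumes "\<phi> \<in> hom G G" "x \<in> carrier G"
  shows "int (Pw x) - 1 = int m * L x"
proof -
  have "[Pw x = 1] (mod m)" using Pw_cong[OF assms(2)] pi_one[OF assms] cong_trans by blast
  then have "[int (Pw x) = 1] (mod int m)" by (metis cong_int_iff of_nat_1)
  then have "int m dvd int (Pw x) - 1" using cong_iff_dvd_diff by blast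
  then show ?thesis unfolding L_def by simp
qed

lemma Pw_hom: assumes hom: "\<phi> \<in> hom G G" and x: "x \<in> carrier G" and y: "y \<in> carrier G"
  shows "[int (Pw (x \<otimes> y)) = int (Pw y) + L x * (int m * A y)] (mod int n)"
proof -
  have Le: "int (Pw x) - 1 = int m * L x" by (rule L_eq[OF hom x])
  have "0 \<le> int (Pw x)" by simp
  then have "0 \<le> int m + int m * L x" using Le m_pos by linarith
  then have "0 \<le> int m * (L x + 1)" by (simp add: distrib_left)
  then have nn: "0 \<le> L x + 1" using m_pos by (simp add: zero_le_mult_iff)
  define k where "k = nat (L x + 1)"
  have "int (Pw x + m) = int (1 + k * m)" using Le nn unfolding k_def by (simp add: algebra_simps)
  then have keq: "Pw x + m = 1 + k * m" by linarith
  have "S y (Pw x) + S y m = S y (1 + k * m)" using S_add_m[OF y] keq by metis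
  also have "\<dots> = S y 1 + int k * S y m" by (rule S_mult[OF y])
  finally have "S y (Pw x) = int (Pw y) + (int k - 1) * S y m"
    by (simp add: S_def algebra_simps)
  also have "int k - 1 = L x" unfolding k_def using nn by simp
  finally have "S y (Pw x) = int (Pw y) + L x * (int m * A y)" using S_A[OF y] by simp
  then show ?thesis using Pw_mult[OF x y] by simp
qed

lemma L_hom: assumes hom: "\<phi> \<in> hom G G" and x: "x \<in> carrier G" and y: "y \<in> carrier G"
  shows "[L (x \<otimes> y) = L y + L x * A y] (mod D)"
proof -
  have xy: "x \<otimes> y \<in> carrier G" using x y by simp
  have "[int (Pw (x \<otimes> y)) - 1 = int (Pw y) + L x * (int m * A y) - 1] (mod int n)"
    by (rule cong_diff[OF Pw_hom[OF assms] cong_refl])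
  then have "[int m * L (x \<otimes> y) = int m * (L y + L x * A y)] (mod int m * D)"
    using L_eq[OF hom xy] L_eq[OF hom y] n_eq by (simp add: algebra_simps)
  then show ?thesis by (metis cong_cancel_mult_int m_pos of_nat_0_less_iff)
qed

lemma Lam_eq: "mate_fun G \<phi> n Pw (\<lambda>_. 1) x = L x mod D"
  unfolding mate_fun_def L_def D_def by simp

end

theorem proposition3p3:
  fixes G :: "('a, 'b) monoid_scheme" and \<phi> :: "'a \<Rightarrow> 'a" and \<pi> Pw :: "'a \<Rightarrow> nat" and n :: nat
  assumes "group G" and "finite (carrier G)"
    and "skew_morphism G \<phi> \<pi>"
    and "ext_power_fun G \<phi> \<pi> n Pw"
  defines "m \<equiv> perm_ord \<phi> (carrier G)"
  defines "Av \<equiv> avg_fun G \<phi> n Pw"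
  defines "Lam \<equiv> mate_fun G \<phi> n Pw (\<lambda>_. 1)"
  shows "(\<forall>x\<in>carrier G. [Av x = Av (\<phi> x)] (mod int (n div m)))
    \<and> (\<forall>x\<in>carrier G. coprime (Av x) (int (n div m)))
    \<and> (\<forall>x\<in>carrier G. \<forall>y\<in>carrier G. [Av (x \<otimes>\<^bsub>G\<^esub> y) = Av x * Av y] (mod int (n div m)))
    \<and> (\<phi> \<in> hom G G \<longrightarrow>
         (\<forall>x\<in>carrier G. \<forall>y\<in>carrier G.
            [Lam (x \<otimes>\<^bsub>G\<^esub> y) = Lam y + Lam x * Av y] (mod int (n div m)))
       \<and> ((\<forall>x\<in>carrier G. [Av x = 1] (mod int (n div m))) \<longrightarrow>
            (\<forall>x\<in>carrier G. \<forall>y\<in>carrier G.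
               [Lam (x \<otimes>\<^bsub>G\<^esub> y) = Lam x + Lam y] (mod int (n div m)))))"
proof -
  interpret skctx G \<phi> \<pi> Pw n
    by (intro skctx.intro skctx_axioms.intro assms(1-4))
  have DD: "int (n div m) = D" unfolding D_def m_def ..
  have Av: "x \<in> carrier G \<Longrightarrow> Av x = A x mod D" for x unfolding Av_def by (rule Av_eq)
  have Lm: "Lam x = L x mod D" for x unfolding Lam_def by (rule Lam_eq)
  have c1: "\<forall>x\<in>carrier G. [Av x = Av (\<phi> x)] (mod D)"
    using Av A_phi phi_in by simp
  have c2: "\<forall>x\<in>carrier G. coprime (Av x) D"
    using Av A_coprime by simp
  have c3: "\<forall>x\<in>carrier G. \<forall>y\<in>carrier G. [Av (x \<otimes>\<^bsub>G\<^esub> y) = Av x * Av y] (mod D)"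
  proof (intro ballI)
    fix x y assume x: "x \<in> carrier G" and y: "y \<in> carrier G"
    have "[A (x \<otimes>\<^bsub>G\<^esub> y) mod D = (A x mod D) * (A y mod D)] (mod D)"
      using A_mult[OF x y] by (simp add: cong_def mod_mult_eq)
    then show "[Av (x \<otimes>\<^bsub>G\<^esub> y) = Av x * Av y] (mod D)" using Av x y by simp
  qed
  have c4: "\<phi> \<in> hom G G \<Longrightarrow> \<forall>x\<in>carrier G. \<forall>y\<in>carrier G. [Lam (x \<otimes>\<^bsub>G\<^esub> y) = Lam y + Lam x * Av y] (mod D)"
  proof (intro ballI)
    fix x y assume hom: "\<phi> \<in> hom G G" and x: "x \<in> carrier G" and y: "y \<in> carrier G"
    have "[L (x \<otimes>\<^bsub>G\<^esub> y) mod D = (L y mod D) + (L x mod D) * (A y mod D)] (mod D)"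
    proof -
      have h1: "[L (x \<otimes>\<^bsub>G\<^esub> y) mod D = L (x \<otimes>\<^bsub>G\<^esub> y)] (mod D)" by (simp add: cong_def)
      have h2: "[L y mod D + L x mod D * (A y mod D) = L y + L x * A y] (mod D)"
        by (intro cong_add cong_mult) (simp_all add: cong_def)
      show ?thesis using cong_trans[OF cong_trans[OF h1 L_hom[OF hom x y]] cong_sym[OF h2]] .
    qed
    then show "[Lam (x \<otimes>\<^bsub>G\<^esub> y) = Lam y + Lam x * Av y] (mod D)" using Av Lm y by simp
  qed
  have c5: "\<phi> \<in> hom G G \<Longrightarrow> (\<forall>x\<in>carrier G. [Av x = 1] (mod D)) \<Longrightarrow>
      \<forall>x\<in>carrier G. \<forall>y\<in>carrier G. [Lam (x \<otimes>\<^bsub>G\<^esub> y) = Lam x + Lam y] (mod D)"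
  proof (intro ballI)
    fix x y assume hom: "\<phi> \<in> hom G G" and one: "\<forall>x\<in>carrier G. [Av x = 1] (mod D)"
      and x: "x \<in> carrier G" and y: "y \<in> carrier G"
    have "[Lam (x \<otimes>\<^bsub>G\<^esub> y) = Lam y + Lam x * Av y] (mod D)" using c4 hom x y by blast
    moreover have "[Lam y + Lam x * Av y = Lam y + Lam x * 1] (mod D)"
      using one y by (intro cong_add cong_mult cong_refl) auto
    ultimately show "[Lam (x \<otimes>\<^bsub>G\<^esub> y) = Lam x + Lam y] (mod D)"
      by (metis add.commute cong_trans mult_1_right)
  qed
  show ?thesis unfolding DD using c1 c2 c3 c4 c5 by blast
qed

end
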